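(* For every $h>0$, $$\widetilde\psi(h):=\inf_{b_1,b_2>0}\big\{-(b_1+b_2)\ln(1-p)+\psi(h,b_1,b_2)\big\}=\big(\kappa_\ell(p)+\kappa_r(p)\big)h.$$
   Context: Setting: $(\omega_x^+)_{x\in\mathbb{Z}}$ i.i.d. with law $\mu$, $\omega_x^+\in[\varepsilon_0,1-\varepsilon_0]$ for some $\varepsilon_0>0$, $\omega_x^-=1-\omega_x^+$, $\rho_i=\omega_i^-/\omega_i^+$, $\mathbf{E}$ expectation under $\mu$; strict nestling: $\inf\{a:\mu(\omega_0^+\le a)>0\}<1/2<\sup\{a:\mu(\omega_0^+\ge a)>0\}$; $p\in(0,1)$. $\psi(h,b_1,b_2)=\sup_{\lambda>0}\{\lambda h-b_2\ln\mathbf{E}(\rho_0^\lambda)\}+\sup_{\lambda>0}\{\lambda h-b_1\ln\mathbf{E}(\rho_0^{-\lambda})\}$. $\kappa_\ell(p)>0$ and $\kappa_r(p)>0$ are the unique positive solutions of $\mathbf{E}(\rho_0^{-\kappa_\ell})=\frac{1}{1-p}$ and $\mathbf{E}(\rho_0^{\kappa_r})=\frac{1}{1-p}$. *)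

theory Defs
  imports "HOL-Probability.Probability"
begin

text \<open>The law mu of omega_0^+ is a probability measure on the reals (Borel sets).
  rho = omega^- / omega^+ = (1 - omega) / omega.\<close>

definition rho :: "real \<Rightarrow> real" where
  "rho w = (1 - w) / w"

definition Erho :: "real measure \<Rightarrow> real \<Rightarrow> real" where
  "Erho mu l = (\<integral>w. rho w powr l \<partial>mu)"

definition psi :: "real measure \<Rightarrow> real \<Rightarrow> real \<Rightarrow> real \<Rightarrow> ereal" where
  "psi mu h b1 b2 =
     (SUP l\<in>{0<..}. ereal (l * h - b2 * ln (Erho mu l)))
   + (SUP l\<in>{0<..}. ereal (l * h - b1 * ln (Erho mu (- l))))"

definition psi_tilde :: "real measure \<Rightarrow> real \<Rightarrow> real \<Rightarrow> ereal" where
  "psi_tilde mu p h =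
     (INF b\<in>{0<..} \<times> {0<..}. ereal (- (fst b + snd b) * ln (1 - p)) + psi mu h (fst b) (snd b))"

definition kappa_l :: "real measure \<Rightarrow> real \<Rightarrow> real" where
  "kappa_l mu p = (THE k. k > 0 \<and> Erho mu (- k) = 1 / (1 - p))"

definition kappa_r :: "real measure \<Rightarrow> real \<Rightarrow> real" where
  "kappa_r mu p = (THE k. k > 0 \<and> Erho mu k = 1 / (1 - p))"

end

theory Submission imports Defs begin

lemma powr_bound:
  fixes y c1 c2 l :: real
  assumes "0 < c1" "c1 \<le> y" "y \<le> c2"
  shows "y powr l \<le> c1 powr l + c2 powr l"
proof (cases "l \<ge> 0")
  case True
  then have "y powr l \<le> c2 powr l" using assms by (intro powr_mono2) auto
  then show ?thesis by (smt (verit) powr_ge_zero)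
next
  case False
  then have "y powr l \<le> c1 powr l" using assms by (intro powr_mono2') auto
  then show ?thesis by (smt (verit) powr_ge_zero)
qed

lemma integrable_powr:
  fixes M :: "'a measure" and Y :: "'a \<Rightarrow> real"
  assumes "prob_space M" "Y \<in> borel_measurable M" "0 < c1"
    "AE w in M. c1 \<le> Y w \<and> Y w \<le> c2"
  shows "integrable M (\<lambda>w. Y w powr l)"
proof -
  interpret prob_space M by fact
  show ?thesis
  proof (rule integrable_const_bound[where B="c1 powr l + c2 powr l"])
    show "AE x in M. norm (Y x powr l) \<le> c1 powr l + c2 powr l"
      using assms(4) by eventually_elim (use assms(3) powr_bound in auto)
  qed (use assms(2) in measurable)
qed

lemma integrable_powr_ln:
  fixes M :: "'a measure" and Y :: "'a \<Rightarrow> real"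
  assumes "prob_space M" "Y \<in> borel_measurable M" "0 < c1"
    "AE w in M. c1 \<le> Y w \<and> Y w \<le> c2"
  shows "integrable M (\<lambda>w. Y w powr l * ln (Y w))"
proof -
  interpret prob_space M by fact
  show ?thesis
  proof (rule integrable_const_bound[where B="(c1 powr l + c2 powr l) * (\<bar>ln c1\<bar> + \<bar>ln c2\<bar>)"])
    show "AE x in M. norm (Y x powr l * ln (Y x)) \<le> (c1 powr l + c2 powr l) * (\<bar>ln c1\<bar> + \<bar>ln c2\<bar>)"
      using assms(4)
    proof eventually_elim
      case (elim x)
      have y: "0 < Y x" using elim assms(3) by auto
      have a: "\<bar>Y x powr l\<bar> \<le> c1 powr l + c2 powr l" using powr_bound[of c1 "Y x" c2 l] elim assms(3) by auto
      have "ln c1 \<le> ln (Y x)" "ln (Y x) \<le> ln c2" using elim y assms(3) by auto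
      then have b: "\<bar>ln (Y x)\<bar> \<le> \<bar>ln c1\<bar> + \<bar>ln c2\<bar>" by linarith
      show ?case unfolding real_norm_def abs_mult
        by (rule mult_mono[OF a b]) auto
    qed
  qed (use assms(2) in measurable)
qed

lemma kappa_generic:
  fixes M :: "'a measure" and Y :: "'a \<Rightarrow> real"
  assumes P: "prob_space M" and Ym: "Y \<in> borel_measurable M" and c1: "0 < c1"
    and bnd: "AE w in M. c1 \<le> Y w \<and> Y w \<le> c2"
    and A: "A \<in> sets M" "measure M A > 0" and q: "1 < q"
    and Aq: "AE w in M. w \<in> A \<longrightarrow> q \<le> Y w" and a: "1 < a"
  defines "F \<equiv> (\<lambda>l. \<integral>w. Y w powr l \<partial>M)"
  shows "\<exists>k>0. (\<forall>k'. (k' > 0 \<and> F k' = a) \<longleftrightarrow> k' = k) \<and> (\<exists>m>0. \<forall>l. ln a + (l - k) * m \<le> ln (F l))"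
proof -
  interpret prob_space M by fact
  have int: "\<And>l. integrable M (\<lambda>w. Y w powr l)"
    by (rule integrable_powr[OF P Ym c1 bnd])
  have intln: "\<And>l. integrable M (\<lambda>w. Y w powr l * ln (Y w))"
    by (rule integrable_powr_ln[OF P Ym c1 bnd])
  have pos: "AE w in M. 0 < Y w" using bnd by eventually_elim (use c1 in auto)
  have F0: "F 0 = 1"
  proof -
    have "F 0 = (\<integral>w. 1 \<partial>M)" unfolding F_def
      by (rule integral_cong_AE) (use pos in \<open>auto\<close>, measurable, use Ym in auto)
    then show ?thesis by (simp add: prob_space)
  qed
  have conv: "convex_on UNIV F"
  proof (rule convex_onI)
    fix t x z :: real assume t: "0 < t" "t < 1"
    have "F ((1 - t) *\<^sub>R x + t *\<^sub>R z) \<le> (\<integral>w. (1 - t) * Y w powr x + t * Y w powr z \<partial>M)"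
      unfolding F_def
    proof (rule integral_mono_AE)
      show "AE w in M. Y w powr ((1 - t) *\<^sub>R x + t *\<^sub>R z) \<le> (1 - t) * Y w powr x + t * Y w powr z"
        using pos
      proof eventually_elim
        case (elim w)
        have "exp ((1 - t) *\<^sub>R (x * ln (Y w)) + t *\<^sub>R (z * ln (Y w))) \<le> (1 - t) * exp (x * ln (Y w)) + t * exp (z * ln (Y w))"
          using t by (intro convex_onD[OF exp_convex]) auto
        then show ?case using elim by (simp add: powr_def algebra_simps)
      qed
    qed (use int in auto)
    also have "\<dots> = (1 - t) * F x + t * F z" unfolding F_def
      using int by simp
    finally show "F ((1 - t) *\<^sub>R x + t *\<^sub>R z) \<le> (1 - t) * F x + t * F z" .
  qed simp
  have cont: "continuous_on UNIV F"
    by (rule convex_on_continuous[OF open_UNIV conv])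
  define mA where "mA = measure M A"
  define L where "L = max 0 (log q (a / mA))"
  have L0: "0 \<le> L" unfolding L_def by simp
  have "a / mA \<le> q powr L"
  proof -
    have "a / mA = q powr (log q (a / mA))" using a A q by (simp add: mA_def)
    also have "\<dots> \<le> q powr L" using q unfolding L_def by (intro powr_mono) auto
    finally show ?thesis .
  qed
  then have aL: "a \<le> mA * q powr L" using A unfolding mA_def by (simp add: field_simps)
  have "mA * q powr L = (\<integral>w. indicator A w * q powr L \<partial>M)"
    using A unfolding mA_def by simp
  also have "\<dots> \<le> F L" unfolding F_def
  proof (rule integral_mono_AE)
    show "AE w in M. indicator A w * q powr L \<le> Y w powr L"
      using Aq pos
    proof eventually_elim
      case (elim w)
      show ?case
      proof (cases "w \<in> A")
        case True then show ?thesis using elim L0 q by (simp add: powr_mono2)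
      qed simp
    qed
  qed (use int A in \<open>auto intro!: integrable_real_indicator simp: top.not_eq_extremum[symmetric]\<close>)
  finally have FL: "a \<le> F L" using aL by linarith
  obtain k where k: "0 \<le> k" "k \<le> L" "F k = a"
    using IVT'[of F 0 a L] F0 a FL L0 continuous_on_subset[OF cont] by force
  have kpos: "0 < k" using k F0 a by (cases "k = 0") auto
  have uniq: "k' = k" if "k' > 0" "F k' = a" for k'
  proof (rule ccontr)
    assume ne: "k' \<noteq> k"
    have gen: "False" if "0 < u" "u < v" "F u = a" "F v = a" for u v
    proof -
      define t where "t = u / v"
      have t: "0 < t" "t < 1" using that by (auto simp: t_def)
      have "F ((1 - t) *\<^sub>R 0 + t *\<^sub>R v) \<le> (1 - t) * F 0 + t * F v"
        using t by (intro convex_onD[OF conv]) auto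
      moreover have "(1 - t) *\<^sub>R 0 + t *\<^sub>R v = u" using that by (simp add: t_def)
      ultimately have "a \<le> (1 - t) + t * a" using that F0 by simp
      then have "(1 - t) * a \<le> (1 - t) * 1" by (simp add: algebra_simps)
      then have "a \<le> 1" using t by (subst (asm) mult_le_cancel_left_pos) auto
      then show False using a by simp
    qed
    show False
      using ne gen[of k k'] gen[of k' k] that k kpos by (cases "k < k'") auto
  qed
  define I where "I = (\<integral>w. Y w powr k * ln (Y w) \<partial>M)"
  define m where "m = I / a"
  have tang: "ln a + (l - k) * m \<le> ln (F l)" for l
  proof -
    define t where "t = l - k"
    have "(\<integral>w. Y w powr k + t * (Y w powr k * ln (Y w)) - t * m * Y w powr k \<partial>M)
        \<le> (\<integral>w. Y w powr l * exp (- (t * m)) \<partial>M)"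
    proof (rule integral_mono_AE)
      show "AE w in M. Y w powr k + t * (Y w powr k * ln (Y w)) - t * m * Y w powr k \<le> Y w powr l * exp (- (t * m))"
        using pos
      proof eventually_elim
        case (elim w)
        have e: "1 + (t * ln (Y w) - t * m) \<le> exp (t * ln (Y w) - t * m)" by (rule exp_ge_add_one_self)
        have "Y w powr k * (1 + (t * ln (Y w) - t * m)) \<le> Y w powr k * exp (t * ln (Y w) - t * m)"
          using e elim by (intro mult_left_mono) auto
        also have "Y w powr k * exp (t * ln (Y w) - t * m) = Y w powr l * exp (- (t * m))"
        proof -
          have "Y w powr k * exp (t * ln (Y w) - t * m) = exp (k * ln (Y w) + (t * ln (Y w) - t * m))"
            using elim by (simp add: powr_def exp_add)
          also have "k * ln (Y w) + (t * ln (Y w) - t * m) = l * ln (Y w) + - (t * m)"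
            by (simp add: t_def algebra_simps)
          also have "exp (l * ln (Y w) + - (t * m)) = Y w powr l * exp (- (t * m))"
            using elim by (simp add: powr_def exp_add[symmetric])
          finally show ?thesis .
        qed
        finally show ?case by (simp add: algebra_simps)
      qed
    qed (use int intln in auto)
    moreover have "(\<integral>w. Y w powr k + t * (Y w powr k * ln (Y w)) - t * m * Y w powr k \<partial>M) = a"
    proof -
      have "(\<integral>w. Y w powr k + t * (Y w powr k * ln (Y w)) - t * m * Y w powr k \<partial>M)
          = F k + t * I - t * m * F k"
        unfolding F_def I_def using int intln by simp
      then show ?thesis using k a by (simp add: m_def)
    qed
    moreover have "(\<integral>w. Y w powr l * exp (- (t * m)) \<partial>M) = F l * exp (- (t * m))"
      unfolding F_def by simp
    ultimately have "a \<le> F l * exp (- (t * m))" by simp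
    then have "a * exp (t * m) \<le> F l" by (simp add: exp_minus field_simps)
    moreover have "0 < a * exp (t * m)" using a by simp
    ultimately have "ln (a * exp (t * m)) \<le> ln (F l)" by (subst ln_le_cancel_iff) auto
    then show ?thesis using a by (simp add: ln_mult t_def)
  qed
  have mpos: "0 < m"
  proof -
    have "ln a + (0 - k) * m \<le> 0" using tang[of 0] F0 by simp
    then have "ln a \<le> k * m" by simp
    moreover have "0 < ln a" using a by simp
    ultimately have "0 < k * m" by linarith
    then show ?thesis using kpos zero_less_mult_pos by blast
  qed
  show ?thesis
    using kpos uniq k tang mpos by blast
qed

lemma sup_part:
  fixes G :: "real \<Rightarrow> real"
  assumes k: "k > 0" and m: "m > 0" and h: "h > 0" and tang: "\<And>l. c + (l - k) * m \<le> G l"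
    and Gk: "G k = c" and b: "b > 0"
  shows "ereal (k * h - b * c) \<le> (SUP l\<in>{0<..}. ereal (l * h - b * G l))"
    and "b = h / m \<Longrightarrow> (SUP l\<in>{0<..}. ereal (l * h - b * G l)) \<le> ereal (k * h - b * c)"
proof -
  show "ereal (k * h - b * c) \<le> (SUP l\<in>{0<..}. ereal (l * h - b * G l))"
    by (rule SUP_upper2[of k]) (use k Gk in auto)
next
  assume bm: "b = h / m"
  show "(SUP l\<in>{0<..}. ereal (l * h - b * G l)) \<le> ereal (k * h - b * c)"
  proof (rule SUP_least)
    fix l :: real assume "l \<in> {0<..}"
    have f1: "b * (c + (l - k) * m) \<le> b * G l" using b tang by (intro mult_left_mono) auto
    have "b * m = h" using bm m by simp
    from f1 have "l * (b * m) - b * G l \<le> k * (b * m) - b * c" by (simp add: algebra_simps)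
    then have "l * h - b * G l \<le> k * h - b * c" using \<open>b * m = h\<close> by simp
    then show "ereal (l * h - b * G l) \<le> ereal (k * h - b * c)" by simp
  qed
qed

theorem lemma3p2:
  fixes mu :: "real measure" and eps0 p h :: real
  assumes "prob_space mu"
    and "sets mu = sets borel"
    and "eps0 > 0"
    and "AE w in mu. eps0 \<le> w \<and> w \<le> 1 - eps0"
    and "Inf {a. measure mu {w. w \<le> a} > 0} < 1/2"
    and "1/2 < Sup {a. measure mu {w. w \<ge> a} > 0}"
    and "0 < p" and "p < 1"
    and "h > 0"
  shows "psi_tilde mu p h = ereal ((kappa_l mu p + kappa_r mu p) * h)"
proof -
  note P = assms(1) and S = assms(2) and e0 = assms(3) and AEb = assms(4)
  interpret prob_space mu by fact
  have bm: "borel_measurable mu = borel_measurable borel" by (rule measurable_cong_sets[OF S refl])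
  have meas: "\<And>f. f \<in> borel_measurable borel \<Longrightarrow> f \<in> borel_measurable mu"
    using bm by blast
  have setsI: "\<And>X. X \<in> sets borel \<Longrightarrow> X \<in> sets mu" using S by simp
  have "\<exists>w. eps0 \<le> w \<and> w \<le> 1 - eps0"
  proof (rule ccontr)
    assume "\<not> ?thesis"
    then have "AE w in mu. False" using AEb by (rule_tac AE_mp[OF AEb]) auto
    then show False by simp
  qed
  then have e1: "eps0 \<le> 1/2" by auto
  define c1 where "c1 = eps0 / (1 - eps0)"
  define c2 where "c2 = (1 - eps0) / eps0"
  have c1: "0 < c1" using e0 e1 by (simp add: c1_def)
  define Y2 where "Y2 = (\<lambda>w::real. w / (1 - w))"
  have rm: "rho \<in> borel_measurable mu" unfolding rho_def by (rule meas) measurable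
  have ym: "Y2 \<in> borel_measurable mu" unfolding Y2_def by (rule meas) measurable
  have bnd1: "AE w in mu. c1 \<le> rho w \<and> rho w \<le> c2"
    using AEb
  proof eventually_elim
    case (elim w)
    have "eps0 / (1 - eps0) \<le> (1 - w) / w" using elim e0 e1
      by (intro frac_le) auto
    moreover have "(1 - w) / w \<le> (1 - eps0) / eps0" using elim e0 e1
      by (intro frac_le) auto
    ultimately show ?case by (simp add: rho_def c1_def c2_def)
  qed
  have bnd2: "AE w in mu. c1 \<le> Y2 w \<and> Y2 w \<le> c2"
    using AEb
  proof eventually_elim
    case (elim w)
    have "eps0 / (1 - eps0) \<le> w / (1 - w)" using elim e0 e1
      by (intro frac_le) auto
    moreover have "w / (1 - w) \<le> (1 - eps0) / eps0" using elim e0 e1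
      by (intro frac_le) auto
    ultimately show ?case by (simp add: Y2_def c1_def c2_def)
  qed
  define a where "a = 1 / (1 - p)"
  have a: "1 < a" using assms(7,8) by (simp add: a_def)
  have "1 \<in> {a. measure mu {w. w \<le> a} > 0}"
  proof -
    have "prob {w. w \<le> (1::real)} = 1"
      by (subst prob_eq_1) (use AEb e0 in \<open>auto intro!: setsI elim!: AE_mp\<close>)
    then show ?thesis by simp
  qed
  then obtain a0 where a0: "a0 < 1/2" "measure mu {w. w \<le> a0} > 0"
    using cInf_lessD[OF _ assms(5)] by blast
  have A0: "{w. w \<le> a0} \<in> sets mu" by (rule setsI) simp
  have a0e: "eps0 \<le> a0"
  proof (rule ccontr)
    assume "\<not> eps0 \<le> a0"
    then have "AE w in mu. w \<notin> {w. w \<le> a0}" using AEb by (auto elim!: AE_mp)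
    then have "prob {w. w \<le> a0} = 0" using prob_eq_0[OF A0] by simp
    then show False using a0 by simp
  qed
  define q0 where "q0 = (1 - a0) / a0"
  have q0: "1 < q0" using a0 a0e e0 by (simp add: q0_def field_simps)
  have Aq0: "AE w in mu. w \<in> {w. w \<le> a0} \<longrightarrow> q0 \<le> rho w"
    using AEb
  proof eventually_elim
    case (elim w)
    show ?case
    proof
      assume "w \<in> {w. w \<le> a0}"
      then show "q0 \<le> rho w" unfolding q0_def rho_def using elim e0 by (intro frac_le) auto
    qed
  qed
  have "eps0 \<in> {a. measure mu {w. w \<ge> a} > 0}"
  proof -
    have "prob {w. w \<ge> eps0} = 1"
      by (subst prob_eq_1) (use AEb e0 in \<open>auto intro!: setsI elim!: AE_mp\<close>)
    then show ?thesis by simp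
  qed
  then obtain a1 where a1: "1/2 < a1" "measure mu {w. w \<ge> a1} > 0"
    using less_cSupD[OF _ assms(6)] by blast
  have A1: "{w. w \<ge> a1} \<in> sets mu" by (rule setsI) simp
  have a1e: "a1 \<le> 1 - eps0"
  proof (rule ccontr)
    assume "\<not> a1 \<le> 1 - eps0"
    then have "AE w in mu. w \<notin> {w. w \<ge> a1}" using AEb by (auto elim!: AE_mp)
    then have "prob {w. w \<ge> a1} = 0" using prob_eq_0[OF A1] by simp
    then show False using a1 by simp
  qed
  define q1 where "q1 = a1 / (1 - a1)"
  have q1: "1 < q1" using a1 a1e e0 by (simp add: q1_def field_simps)
  have Aq1: "AE w in mu. w \<in> {w. w \<ge> a1} \<longrightarrow> q1 \<le> Y2 w"
    using AEb
  proof eventually_elim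
    case (elim w)
    show ?case
    proof
      assume "w \<in> {w. w \<ge> a1}"
      then show "q1 \<le> Y2 w" unfolding q1_def Y2_def using elim e0 a1e by (intro frac_le) auto
    qed
  qed
  obtain kr mr where kr: "kr > 0" "\<And>k'. (k' > 0 \<and> Erho mu k' = a) \<longleftrightarrow> k' = kr"
      and mr: "mr > 0" "\<And>l. ln a + (l - kr) * mr \<le> ln (Erho mu l)"
    using kappa_generic[OF P rm c1 bnd1 A0 a0(2) q0 Aq0 a] unfolding Erho_def by blast
  have E2: "Erho mu (- l) = (\<integral>w. Y2 w powr l \<partial>mu)" for l
    unfolding Erho_def
  proof (rule integral_cong_AE)
    show "AE w in mu. rho w powr - l = Y2 w powr l"
      using AEb
    proof eventually_elim
      case (elim w)
      then have "0 < w" "w < 1" using e0 by auto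
      then have "Y2 w = inverse (rho w)" by (simp add: Y2_def rho_def)
      moreover have "0 < rho w" using \<open>0 < w\<close> \<open>w < 1\<close> by (simp add: rho_def)
      ultimately show ?case by (simp add: powr_def ln_inverse)
    qed
  qed (use rm ym in measurable)
  obtain kl ml where kl: "kl > 0" "\<And>k'. (k' > 0 \<and> Erho mu (- k') = a) \<longleftrightarrow> k' = kl"
      and ml: "ml > 0" "\<And>l. ln a + (l - kl) * ml \<le> ln (Erho mu (- l))"
    using kappa_generic[OF P ym c1 bnd2 A1 a1(2) q1 Aq1 a] unfolding E2[symmetric] by blast
  have Er: "Erho mu kr = a" using kr(2)[of kr] by blast
  have El: "Erho mu (- kl) = a" using kl(2)[of kl] by blast
  have kappa_r: "kappa_r mu p = kr"
    unfolding kappa_r_def a_def[symmetric]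
  proof (rule the_equality)
    show "0 < kr \<and> Erho mu kr = a" using kr(1) Er by blast
    show "\<And>k. 0 < k \<and> Erho mu k = a \<Longrightarrow> k = kr" using kr(2) by blast
  qed
  have kappa_l: "kappa_l mu p = kl"
    unfolding kappa_l_def a_def[symmetric]
  proof (rule the_equality)
    show "0 < kl \<and> Erho mu (- kl) = a" using kl(1) El by blast
    show "\<And>k. 0 < k \<and> Erho mu (- k) = a \<Longrightarrow> k = kl" using kl(2) by blast
  qed
  define c where "c = ln a"
  have cp: "- ln (1 - p) = c" unfolding c_def a_def using assms(7,8) by (simp add: ln_div)
  have Gr: "ln (Erho mu kr) = c" using Er unfolding c_def by simp
  have Gl: "ln (Erho mu (- kl)) = c" using El unfolding c_def by simp
  note sr = sup_part[of kr mr h c "\<lambda>l. ln (Erho mu l)", OF kr(1) mr(1) assms(9) mr(2)[folded c_def] Gr]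
  note sl = sup_part[of kl ml h c "\<lambda>l. ln (Erho mu (- l))", OF kl(1) ml(1) assms(9) ml(2)[folded c_def] Gl]
  have val: "ereal (- (b1 + b2) * ln (1 - p)) + psi mu h b1 b2 \<ge> ereal ((kl + kr) * h)"
    if "b1 > 0" "b2 > 0" for b1 b2
  proof -
    have "ereal ((kl + kr) * h) = ereal ((b1 + b2) * c) + (ereal (kr * h - b2 * c) + ereal (kl * h - b1 * c))"
      by (simp add: algebra_simps)
    also have "\<dots> \<le> ereal (- (b1 + b2) * ln (1 - p)) + psi mu h b1 b2"
    proof -
      have e: "ereal ((b1 + b2) * c) = ereal (- (b1 + b2) * ln (1 - p))" unfolding cp[symmetric] by (simp add: algebra_simps)
      show ?thesis unfolding psi_def
        by (rule add_mono[OF eq_refl[OF e] add_mono[OF sr(1)[OF that(2)] sl(1)[OF that(1)]]])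
    qed
    finally show ?thesis .
  qed
  have le: "psi_tilde mu p h \<le> ereal ((kl + kr) * h)"
  proof -
    define b1 where "b1 = h / ml"
    define b2 where "b2 = h / mr"
    have b: "b1 > 0" "b2 > 0" using ml mr assms(9) by (auto simp: b1_def b2_def)
    have "psi_tilde mu p h \<le> ereal (- (b1 + b2) * ln (1 - p)) + psi mu h b1 b2"
      unfolding psi_tilde_def by (rule INF_lower2[of "(b1, b2)"]) (use b in auto)
    also have "\<dots> \<le> ereal ((b1 + b2) * c) + (ereal (kr * h - b2 * c) + ereal (kl * h - b1 * c))"
    proof -
      have e: "ereal (- (b1 + b2) * ln (1 - p)) = ereal ((b1 + b2) * c)" unfolding cp[symmetric] by (simp add: algebra_simps)
      show ?thesis unfolding psi_def
        by (rule add_mono[OF eq_refl[OF e] add_mono[OF sr(2)[OF b(2) b2_def] sl(2)[OF b(1) b1_def]]])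
    qed
    also have "\<dots> = ereal ((kl + kr) * h)" by (simp add: algebra_simps)
    finally show ?thesis .
  qed
  have ge: "ereal ((kl + kr) * h) \<le> psi_tilde mu p h"
    unfolding psi_tilde_def by (rule INF_greatest) (use val in auto)
  show ?thesis using le ge kappa_r kappa_l by simp
qed

end
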